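(* Let $G$ be a finite, connected, simple, bridgeless, triangle-free cubic graph, and let $\Lambda$ be a valid labeling of $\mathfrak{L}_2(G)$. Then for every $\gamma\in\Gamma_\Lambda$ the projected walk $W_\gamma$ is a closed walk in $G$, and every edge of $G$ occurs in total exactly twice among the projected walks $W_\gamma$, $\gamma\in\Gamma_\Lambda$.
   Context: $\mathcal{L}(H)$ is the line graph of $H$ (vertices = edges of $H$, adjacent iff sharing an endpoint). Let $\mathcal{T}$ be the set of triangles of $\mathcal{L}(\mathcal{L}(G))$ formed by the three edges of a triangle of $\mathcal{L}(G)$. $\mathfrak{L}_2(G)$ has the vertex set of $\mathcal{L}(\mathcal{L}(G))$ and the edges of $\mathcal{L}(\mathcal{L}(G))$ not lying in any triangle of $\mathcal{T}$. For an edge $e$ of $G$, the reduced clique $\mathbb{X}_e$ is the subgraph of $\mathfrak{L}_2(G)$ on the four edges of $\mathcal{L}(G)$ incident to $e$, with all edges of $\mathfrak{L}_2(G)$ among them (a 4-cycle). A labeling $\Lambda$ gives each edge of $\mathfrak{L}_2(G)$ a label in $\{0,1\}$ ($1$ = open); it is valid if in every reduced clique each vertex is incident to two edges of that clique with different labels. $\Gamma_\Lambda$ is the set of connected components (cycles) of the subgraph formed by the open edges. Projected walk: a vertex $f$ of $\mathfrak{L}_2(G)$ is an edge of $\mathcal{L}(G)$, i.e. an unordered pair of distinct edges of $G$ sharing an endpoint. If $\gamma$ has vertices $f_1,\dots,f_m$ in cyclic order, consecutive $f_j,f_{j+1}$ (indices mod $m$) share exactly one edge $e_j$ of $G$; the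 projected walk $W_\gamma$ is the cyclic sequence $(e_1,\dots,e_m)$ of edges of $G$. *)

theory Defs
  imports Main
begin

definition simple_graph :: "'v set \<Rightarrow> 'v set set \<Rightarrow> bool" where
  "simple_graph V E \<longleftrightarrow> finite V \<and>
     (\<forall>e\<in>E. \<exists>u v. u \<noteq> v \<and> u \<in> V \<and> v \<in> V \<and> e = {u, v})"

definition adj_rel :: "'v set set \<Rightarrow> ('v \<times> 'v) set" where
  "adj_rel E = {(u, v). {u, v} \<in> E}"

definition connected_graph :: "'v set \<Rightarrow> 'v set set \<Rightarrow> bool" where
  "connected_graph V E \<longleftrightarrow> (\<forall>u\<in>V. \<forall>v\<in>V. (u, v) \<in> (adj_rel E)\<^sup>*)"

definition cubic :: "'v set \<Rightarrow> 'v set set \<Rightarrow> bool" where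
  "cubic V E \<longleftrightarrow> (\<forall>v\<in>V. card {e\<in>E. v \<in> e} = 3)"

definition bridgeless :: "'v set \<Rightarrow> 'v set set \<Rightarrow> bool" where
  "bridgeless V E \<longleftrightarrow> (\<forall>e\<in>E. connected_graph V (E - {e}))"

definition triangle_free :: "'v set set \<Rightarrow> bool" where
  "triangle_free E \<longleftrightarrow>
     \<not> (\<exists>u v w. u \<noteq> v \<and> v \<noteq> w \<and> u \<noteq> w \<and> {u, v} \<in> E \<and> {v, w} \<in> E \<and> {u, w} \<in> E)"

text \<open>Edge set of the line graph of a graph with edge set EH (its vertex set is EH):
  unordered pairs of distinct edges sharing an endpoint.\<close>
definition line_edges :: "'a set set \<Rightarrow> 'a set set set" where
  "line_edges EH = {{x, y} | x y. x \<in> EH \<and> y \<in> EH \<and> x \<noteq> y \<and> x \<inter> y \<noteq> {}}"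

definition LG_triangle :: "'v set set \<Rightarrow> 'v set \<Rightarrow> 'v set \<Rightarrow> 'v set \<Rightarrow> bool" where
  "LG_triangle E x y z \<longleftrightarrow> x \<noteq> y \<and> y \<noteq> z \<and> x \<noteq> z \<and>
     {x, y} \<in> line_edges E \<and> {y, z} \<in> line_edges E \<and> {x, z} \<in> line_edges E"

text \<open>Edges of the reduced second line graph: edges of L(L(G)) not lying in any triangle of
  L(L(G)) formed by the three edges {x,y},{y,z},{x,z} of a triangle of L(G).\<close>
definition L2_edges :: "'v set set \<Rightarrow> 'v set set set set" where
  "L2_edges E = {a \<in> line_edges (line_edges E).
      \<not> (\<exists>x y z. LG_triangle E x y z \<and> a \<subseteq> {{x, y}, {y, z}, {x, z}})}"

abbreviation L2_verts :: "'v set set \<Rightarrow> 'v set set set" where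
  "L2_verts E \<equiv> line_edges E"

definition rc_verts :: "'v set set \<Rightarrow> 'v set \<Rightarrow> 'v set set set" where
  "rc_verts E e = {f \<in> line_edges E. e \<in> f}"

definition rc_edges :: "'v set set \<Rightarrow> 'v set \<Rightarrow> 'v set set set set" where
  "rc_edges E e = {a \<in> L2_edges E. a \<subseteq> rc_verts E e}"

text \<open>Labelings: labels in {0,1}, 1 = open.\<close>
definition labeling :: "'v set set \<Rightarrow> ('v set set set \<Rightarrow> nat) \<Rightarrow> bool" where
  "labeling E \<Lambda> \<longleftrightarrow> (\<forall>a\<in>L2_edges E. \<Lambda> a \<in> {0, 1})"

definition valid_labeling :: "'v set set \<Rightarrow> ('v set set set \<Rightarrow> nat) \<Rightarrow> bool" where
  "valid_labeling E \<Lambda> \<longleftrightarrow> labeling E \<Lambda> \<and>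
     (\<forall>e\<in>E. \<forall>f\<in>rc_verts E e. \<exists>a\<in>rc_edges E e. \<exists>b\<in>rc_edges E e.
         f \<in> a \<and> f \<in> b \<and> \<Lambda> a \<noteq> \<Lambda> b)"

definition open_edges :: "'v set set \<Rightarrow> ('v set set set \<Rightarrow> nat) \<Rightarrow> 'v set set set set" where
  "open_edges E \<Lambda> = {a \<in> L2_edges E. \<Lambda> a = 1}"

definition Gamma :: "'v set set \<Rightarrow> ('v set set set \<Rightarrow> nat) \<Rightarrow> 'v set set set set" where
  "Gamma E \<Lambda> = {{g \<in> L2_verts E. (f, g) \<in> (adj_rel (open_edges E \<Lambda>))\<^sup>*} | f. f \<in> L2_verts E}"

definition cyclic_order ::
  "'v set set \<Rightarrow> ('v set set set \<Rightarrow> nat) \<Rightarrow> 'v set set set \<Rightarrow> 'v set set list \<Rightarrow> bool" where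
  "cyclic_order E \<Lambda> \<gamma> fs \<longleftrightarrow> distinct fs \<and> set fs = \<gamma> \<and>
     (\<forall>i < length fs. {fs ! i, fs ! ((i + 1) mod length fs)} \<in> open_edges E \<Lambda>)"

definition proj_walk :: "'v set set list \<Rightarrow> 'v set list" where
  "proj_walk fs = map (\<lambda>i. the_elem (fs ! i \<inter> fs ! ((i + 1) mod length fs))) [0..<length fs]"

definition closed_walk :: "'v set set \<Rightarrow> 'v set list \<Rightarrow> bool" where
  "closed_walk E es \<longleftrightarrow> es \<noteq> [] \<and> (\<exists>vs. length vs = length es \<and>
     (\<forall>i < length es. es ! i \<in> E \<and> es ! i = {vs ! i, vs ! ((i + 1) mod length es)}))"

end

theory Submission
  imports Defs
begin

locale two_reg =
  fixes W :: "'a set" and Op :: "'a set set"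
  assumes finW: "finite W"
    and edgeW: "\<And>a. a \<in> Op \<Longrightarrow> \<exists>x y. a = {x,y} \<and> x \<noteq> y \<and> x \<in> W \<and> y \<in> W"
    and deg: "\<And>x. x \<in> W \<Longrightarrow> card {y. {x,y} \<in> Op} = 2"
begin

definition nb where "nb x = {y. {x,y} \<in> Op}"
definition comp where "comp x = {y \<in> W. (x,y) \<in> (adj_rel Op)\<^sup>*}"
definition cyc where "cyc fs \<longleftrightarrow> distinct fs \<and> (\<forall>i<length fs. {fs!i, fs!((i+1) mod length fs)} \<in> Op)"

lemma nb_sym: "y \<in> nb x \<longleftrightarrow> x \<in> nb y"
  unfolding nb_def by (simp add: insert_commute)

lemma nb_W: assumes "y \<in> nb x" shows "y \<in> W \<and> x \<in> W \<and> x \<noteq> y"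
proof -
  have "{x,y} \<in> Op" using assms unfolding nb_def by simp
  then obtain p q where pq: "{x,y} = {p,q}" "p \<noteq> q" "p \<in> W" "q \<in> W" using edgeW by blast
  thus ?thesis by (auto simp: doubleton_eq_iff)
qed

lemma card_nb: "x \<in> W \<Longrightarrow> card (nb x) = 2"
  using deg nb_def by auto

lemma fin_nb: "x \<in> W \<Longrightarrow> finite (nb x)"
  using card_nb by (metis card.infinite zero_neq_numeral)

lemma adj: "(x,y) \<in> adj_rel Op \<longleftrightarrow> y \<in> nb x"
  unfolding adj_rel_def nb_def by simp

lemma sym_adj: "sym ((adj_rel Op)\<^sup>*)"
  by (rule sym_rtrancl) (auto simp: sym_def adj nb_sym[symmetric])

lemma comp_closed: "z \<in> comp x \<Longrightarrow> y \<in> nb z \<Longrightarrow> y \<in> comp x"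
  unfolding comp_def using nb_W adj by (auto intro: rtrancl_into_rtrancl)

lemma self_comp: "x \<in> W \<Longrightarrow> x \<in> comp x"
  unfolding comp_def by simp

lemma comp_eq: assumes "y \<in> comp x" shows "comp y = comp x"
proof -
  have xy: "(x,y) \<in> (adj_rel Op)\<^sup>*" using assms comp_def by auto
  hence yx: "(y,x) \<in> (adj_rel Op)\<^sup>*" using sym_adj by (meson symD)
  show ?thesis unfolding comp_def using xy yx by (auto intro: rtrancl_trans)
qed

lemma comp_disj: "z \<in> comp x \<Longrightarrow> z \<in> comp y \<Longrightarrow> comp x = comp y"
  using comp_eq by metis

lemma comp_W: "comp x \<subseteq> W" unfolding comp_def by auto

lemma mod_facts:
  fixes n i :: nat
  assumes "3 \<le> n" "i < n"
  shows "((i + n - 1) mod n + 1) mod n = i" "(i + 1) mod n \<noteq> (i + n - 1) mod n"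
    "(i + 1) mod n < n" "(i + n - 1) mod n < n"
proof -
  have "((i + n - 1) mod n + 1) mod n = (i + n - 1 + 1) mod n" by (rule mod_add_left_eq)
  also have "i + n - 1 + 1 = i + n" using assms by simp
  finally show "((i + n - 1) mod n + 1) mod n = i" using assms by simp
  show "(i + 1) mod n < n" "(i + n - 1) mod n < n" using assms by auto
  show "(i + 1) mod n \<noteq> (i + n - 1) mod n"
  proof (cases "i = 0")
    case True thus ?thesis using assms by auto
  next
    case False
    hence "i + n - 1 = (i - 1) + n" by simp
    hence "(i + n - 1) mod n = (i - 1) mod n" by simp
    also have "\<dots> = i - 1" using assms by simp
    finally have a: "(i + n - 1) mod n = i - 1" .
    show ?thesis
    proof (cases "i + 1 < n")
      case True thus ?thesis using a False by simp
    next
      case F2: False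
      hence "i + 1 = n" using assms by simp
      thus ?thesis using a assms by auto
    qed
  qed
qed

lemma cyc_nbrs:
  assumes "cyc fs" "3 \<le> length fs" "i < length fs"
  shows "nb (fs!i) = {fs!((i+1) mod length fs), fs!((i + length fs - 1) mod length fs)}"
    (is "_ = {?a, ?b}")
proof -
  let ?n = "length fs"
  note m = mod_facts[OF assms(2,3)]
  have W: "fs!i \<in> W" using assms nb_W unfolding cyc_def nb_def by blast
  have "?a \<in> nb (fs!i)" using assms unfolding cyc_def nb_def by auto
  moreover have "{fs!((i + ?n - 1) mod ?n), fs!(((i + ?n - 1) mod ?n + 1) mod ?n)} \<in> Op"
    using assms m unfolding cyc_def by blast
  hence "?b \<in> nb (fs!i)" using m(1) nb_sym unfolding nb_def by simp
  moreover have "?a \<noteq> ?b" using assms m unfolding cyc_def by (simp add: nth_eq_iff_index_eq)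
  ultimately show ?thesis using card_nb[OF W] fin_nb[OF W]
    by (metis card_2_iff card_subset_eq empty_subsetI insert_subset)
qed

lemma mod_two_false:
  fixes i j n :: nat
  assumes n: "3 \<le> n" and i: "i < n" and j: "j < n" and hi: "i = (j+1) mod n" and hj: "j = (i+1) mod n"
  shows False
proof (cases "i + 1 < n")
  case True
  have "(i+1) mod n = i+1" using True by simp
  with hj have j1: "j = i+1" by simp
  show False
  proof (cases "j + 1 < n")
    case True
    have "(j+1) mod n = j+1" using True by simp
    with hi have "i = j+1" by simp
    thus False using j1 by simp
  next
    case False
    hence "j + 1 = n" using j by simp
    hence "(j+1) mod n = 0" by simp
    with hi have "i = 0" by simp
    thus False using j1 \<open>j + 1 = n\<close> n by simp
  qed
next
  case False
  hence e: "i + 1 = n" using i by simp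
  hence "(i+1) mod n = 0" by simp
  with hj have "j = 0" by simp
  hence "(j+1) mod n = 1" using n by simp
  with hi have "i = 1" by simp
  thus False using e n by simp
qed

lemma cyc_edges:
  assumes "cyc fs" "3 \<le> length fs"
  shows "{a\<in>Op. a \<subseteq> set fs} = (\<lambda>i. {fs!i, fs!((i+1) mod length fs)}) ` {..<length fs}"
    and "inj_on (\<lambda>i. {fs!i, fs!((i+1) mod length fs)}) {..<length fs}"
proof -
  let ?n = "length fs"
  let ?e = "\<lambda>i. {fs!i, fs!((i+1) mod ?n)}"
  show "{a\<in>Op. a \<subseteq> set fs} = ?e ` {..<?n}"
  proof
    have "0 < ?n" using assms(2) by linarith
    hence "\<And>i. (i+1) mod ?n < ?n" by simp
    thus "?e ` {..<?n} \<subseteq> {a\<in>Op. a \<subseteq> set fs}"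
      using assms unfolding cyc_def by (auto intro!: nth_mem)
  next
    show "{a\<in>Op. a \<subseteq> set fs} \<subseteq> ?e ` {..<?n}"
    proof
      fix a assume a: "a \<in> {a\<in>Op. a \<subseteq> set fs}"
      then obtain p q where pq: "a = {p,q}" "p \<noteq> q" using edgeW by blast
      have "p \<in> set fs" using a pq by auto
      then obtain i where i: "i < ?n" "fs!i = p" by (auto simp: in_set_conv_nth)
      have "q \<in> nb p" using a pq unfolding nb_def by auto
      hence qq: "q = fs!((i+1) mod ?n) \<or> q = fs!((i + ?n - 1) mod ?n)"
        using cyc_nbrs[OF assms i(1)] i by simp
      note m = mod_facts[OF assms(2) i(1)]
      from qq show "a \<in> ?e ` {..<?n}"
      proof (elim disjE)
        assume "q = fs!((i+1) mod ?n)"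
        thus ?thesis using pq i by auto
      next
        assume "q = fs!((i + ?n - 1) mod ?n)"
        hence "a = ?e ((i + ?n - 1) mod ?n)" using pq i m(1) by auto
        thus ?thesis using m(4) by blast
      qed
    qed
  qed
  show "inj_on ?e {..<?n}"
  proof (rule inj_onI)
    fix i j assume i: "i \<in> {..<?n}" and j: "j \<in> {..<?n}" and eq: "?e i = ?e j"
    have d: "distinct fs" using assms unfolding cyc_def by simp
    have "0 < ?n" using assms(2) by linarith
    hence mi: "(i+1) mod ?n < ?n" "(j+1) mod ?n < ?n" by simp_all
    from eq have "(fs!i = fs!j \<and> fs!((i+1) mod ?n) = fs!((j+1) mod ?n)) \<or>
       (fs!i = fs!((j+1) mod ?n) \<and> fs!((i+1) mod ?n) = fs!j)"
      by (simp add: doubleton_eq_iff)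
    thus "i = j"
    proof
      assume "fs!i = fs!j \<and> fs!((i+1) mod ?n) = fs!((j+1) mod ?n)"
      thus ?thesis using d i j by (simp add: nth_eq_iff_index_eq)
    next
      assume h: "fs!i = fs!((j+1) mod ?n) \<and> fs!((i+1) mod ?n) = fs!j"
      have i': "i < ?n" "j < ?n" using i j by auto
      have h1: "i = (j+1) mod ?n" using iffD1[OF nth_eq_iff_index_eq[OF d i'(1) mi(2)]] h by blast
      have h2': "(i+1) mod ?n = j" using iffD1[OF nth_eq_iff_index_eq[OF d mi(1) i'(2)]] h by blast
      hence h2: "j = (i+1) mod ?n" by (rule sym)
      show ?thesis using mod_two_false[OF assms(2) i' h1 h2] by blast
    qed
  qed
qed

lemma cycle_exists:
  assumes x: "x \<in> W"
  shows "\<exists>fs. cyc fs \<and> set fs = comp x \<and> 3 \<le> length fs"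
proof -
  define P where "P ps \<longleftrightarrow> ps \<noteq> [] \<and> hd ps = x \<and> distinct ps \<and> set ps \<subseteq> W \<and>
      (\<forall>i. Suc i < length ps \<longrightarrow> {ps!i, ps!Suc i} \<in> Op)" for ps
  have "P [x]" using x by (simp add: P_def)
  moreover have "\<forall>ps. P ps \<longrightarrow> length ps < Suc (card W)"
  proof (intro allI impI)
    fix ps assume "P ps"
    hence "card (set ps) \<le> card W" "card (set ps) = length ps"
      using finW by (auto simp: P_def intro: card_mono distinct_card)
    thus "length ps < Suc (card W)" by simp
  qed
  ultimately obtain ps where Pps: "P ps" and mx: "\<And>qs. P qs \<Longrightarrow> length qs \<le> length ps"
    using ex_has_greatest_nat[of P "[x]" length "Suc (card W)"] by blast
  define n where "n = length ps"
  define l where "l = ps!(n-1)"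
  have n1: "n \<ge> 1" using Pps by (cases ps) (auto simp: P_def n_def)
  have ps0: "ps!0 = x" using Pps by (cases ps) (auto simp: P_def)
  have dps: "distinct ps" using Pps by (simp add: P_def)
  have edges: "\<And>i. Suc i < n \<Longrightarrow> {ps!i, ps!Suc i} \<in> Op" using Pps by (simp add: P_def n_def)
  have lW: "l \<in> W" using Pps n1 by (auto simp: P_def l_def n_def)
  have lset: "l \<in> set ps" using n1 by (simp add: l_def n_def)
  have nbl: "nb l \<subseteq> set ps"
  proof
    fix y assume y: "y \<in> nb l"
    show "y \<in> set ps"
    proof (rule ccontr)
      assume ny: "y \<notin> set ps"
      have "P (ps @ [y])" unfolding P_def
      proof (intro conjI allI impI)
        show "ps @ [y] \<noteq> []" by simp
        show "hd (ps @ [y]) = x" using Pps by (simp add: P_def)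
        show "distinct (ps @ [y])" using dps ny by simp
        show "set (ps @ [y]) \<subseteq> W" using Pps nb_W[OF y] by (simp add: P_def)
        fix i assume i: "Suc i < length (ps @ [y])"
        show "{(ps @ [y]) ! i, (ps @ [y]) ! Suc i} \<in> Op"
        proof (cases "Suc i < n")
          case True thus ?thesis using edges[OF True] by (simp add: nth_append n_def)
        next
          case False
          hence si: "Suc i = n" using i by (simp add: n_def)
          hence "i = n - 1" by simp
          hence "(ps @ [y]) ! i = l" "(ps @ [y]) ! Suc i = y"
            using si by (auto simp: nth_append n_def l_def)
          thus ?thesis using y by (simp add: nb_def)
        qed
      qed
      from mx[OF this] show False by simp
    qed
  qed
  have n2: "n \<ge> 2"
  proof (rule ccontr)
    assume "\<not> n \<ge> 2"
    hence "n = 1" using n1 by simp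
    hence "ps = [x]" using ps0 unfolding n_def by (cases ps) auto
    hence "set ps = {x}" "l = x" using \<open>n = 1\<close> unfolding l_def by auto
    hence "nb x \<subseteq> {x}" using nbl by simp
    moreover have "x \<notin> nb x" using nb_W by blast
    ultimately have "nb x = {}" by blast
    thus False using card_nb[OF x] by simp
  qed
  have "\<not> nb l \<subseteq> {ps!(n-2)}"
  proof
    assume "nb l \<subseteq> {ps!(n-2)}"
    hence "card (nb l) \<le> card {ps!(n-2)}" by (intro card_mono) simp_all
    hence "card (nb l) \<le> 1" by simp
    thus False using card_nb[OF lW] by simp
  qed
  then obtain y where y: "y \<in> nb l" "y \<noteq> ps!(n-2)" by blast
  have "y \<in> set ps" using nbl y by blast
  then obtain j where j: "j < n" "ps!j = y" unfolding n_def by (metis in_set_conv_nth)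
  have "y \<noteq> l" using nb_W[OF y(1)] by blast
  hence "j \<noteq> n - 1" using j(2) unfolding l_def by blast
  moreover have "j \<noteq> n - 2" using j y by blast
  ultimately have jn: "j + 2 < n" using j by simp
  have j0: "j = 0"
  proof (rule ccontr)
    assume j0: "j \<noteq> 0"
    let ?z = "ps!j"
    have zW: "?z \<in> W" using j Pps by (auto simp: P_def n_def)
    have "{ps!(j-1), ps!j} \<in> Op" using edges[of "j-1"] j0 j by simp
    hence a: "ps!(j-1) \<in> nb ?z" by (simp add: nb_def insert_commute)
    have b: "ps!(j+1) \<in> nb ?z" using edges[of j] jn by (simp add: nb_def)
    have c: "l \<in> nb ?z" using y j nb_sym by simp
    have dd: "ps!(j-1) \<noteq> ps!(j+1)" "ps!(j-1) \<noteq> l" "ps!(j+1) \<noteq> l"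
      using dps jn j0 unfolding l_def n_def by (simp_all add: nth_eq_iff_index_eq)
    have "card {ps!(j-1), ps!(j+1), l} = 3" using dd by simp
    moreover have "card {ps!(j-1), ps!(j+1), l} \<le> card (nb ?z)"
      using a b c fin_nb[OF zW] by (intro card_mono) auto
    ultimately show False using card_nb[OF zW] by simp
  qed
  have cl: "{l, ps!0} \<in> Op" using y j j0 by (simp add: nb_def)
  have cyc: "cyc ps" unfolding cyc_def
  proof (intro conjI allI impI)
    show "distinct ps" by (rule dps)
    fix i assume i: "i < length ps"
    show "{ps ! i, ps ! ((i + 1) mod length ps)} \<in> Op"
    proof (cases "i + 1 < n")
      case True thus ?thesis using edges[of i] by (simp add: n_def)
    next
      case False
      hence i1: "i = n - 1" using i n_def by simp
      hence "i + 1 = n" using n1 by simp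
      hence "(i + 1) mod length ps = 0" by (simp add: n_def)
      thus ?thesis using cl i1 by (simp add: l_def n_def)
    qed
  qed
  have n3: "3 \<le> length ps" using jn j0 n_def by simp
  have sub: "set ps \<subseteq> comp x"
  proof -
    have "\<And>i. i < n \<Longrightarrow> (x, ps!i) \<in> (adj_rel Op)\<^sup>*"
    proof -
      fix i show "i < n \<Longrightarrow> (x, ps!i) \<in> (adj_rel Op)\<^sup>*"
      proof (induction i)
        case 0 thus ?case using ps0 by simp
      next
        case (Suc i)
        hence "(x, ps!i) \<in> (adj_rel Op)\<^sup>*" by simp
        moreover have "(ps!i, ps!Suc i) \<in> adj_rel Op" using edges[OF Suc.prems] by (simp add: adj nb_def)
        ultimately show ?case by (rule rtrancl_into_rtrancl)
      qed
    qed
    thus ?thesis using Pps unfolding comp_def P_def n_def by (auto simp: in_set_conv_nth)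
  qed
  have clo: "\<And>z. z \<in> set ps \<Longrightarrow> nb z \<subseteq> set ps"
  proof -
    fix z assume "z \<in> set ps"
    then obtain i where i: "i < length ps" "ps!i = z" by (auto simp: in_set_conv_nth)
    show "nb z \<subseteq> set ps" using cyc_nbrs[OF cyc n3 i(1)] i mod_facts[OF n3 i(1)] by auto
  qed
  have sup: "comp x \<subseteq> set ps"
  proof
    fix y assume "y \<in> comp x"
    hence "(x, y) \<in> (adj_rel Op)\<^sup>*" by (simp add: comp_def)
    thus "y \<in> set ps"
    proof (induction rule: rtrancl_induct)
      case base thus ?case using n1 ps0 by (metis One_nat_def Suc_le_lessD n_def nth_mem)
    next
      case (step a b) thus ?case using clo by (auto simp: adj)
    qed
  qed
  show ?thesis using cyc sub sup n3 by blast
qed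

end

definition cv :: "'v set set \<Rightarrow> 'v" where "cv f = the_elem (\<Inter> f)"

locale gr =
  fixes V :: "'v set" and E :: "'v set set" and \<Lambda> :: "'v set set set \<Rightarrow> nat"
  assumes sg: "simple_graph V E" and cub: "cubic V E" and val: "valid_labeling E \<Lambda>"
begin

lemma edge2: "e \<in> E \<Longrightarrow> \<exists>u w. u \<noteq> w \<and> u \<in> V \<and> w \<in> V \<and> e = {u,w}"
  using sg unfolding simple_graph_def by blast

lemma finE: "finite E"
proof -
  have "finite V" using sg simple_graph_def by blast
  moreover have "E \<subseteq> Pow V" using edge2 by blast
  ultimately show ?thesis by (meson finite_Pow_iff finite_subset)
qed

lemma two_set_eq: "e \<in> E \<Longrightarrow> s \<in> e \<Longrightarrow> t \<in> e \<Longrightarrow> s \<noteq> t \<Longrightarrow> e = {s,t}"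
  using edge2 by blast

lemma inter_single:
  assumes x: "x \<in> E" and y: "y \<in> E" and "x \<noteq> y" and "x \<inter> y \<noteq> {}"
  shows "\<exists>v. x \<inter> y = {v}"
proof -
  obtain v where v: "v \<in> x" "v \<in> y" using assms by blast
  have "x \<inter> y \<subseteq> {v}"
  proof
    fix z assume z: "z \<in> x \<inter> y"
    show "z \<in> {v}"
    proof (rule ccontr)
      assume "z \<notin> {v}"
      hence "x = {v,z}" "y = {v,z}" using two_set_eq x y v z by auto
      thus False using assms by simp
    qed
  qed
  thus ?thesis using v by blast
qed

lemma line_dest:
  assumes "f \<in> line_edges E" "e \<in> f"
  shows "\<exists>p. f = {e,p} \<and> p \<in> E \<and> p \<noteq> e \<and> e \<inter> p \<noteq> {} \<and> e \<in> E"
  using assms unfolding line_edges_def by (auto simp: Int_commute insert_commute)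

lemma cv_pair: "e \<inter> p = {s} \<Longrightarrow> cv {e,p} = s"
  unfolding cv_def by simp

lemma cv_in: assumes "f \<in> line_edges E" "e \<in> f" shows "cv f \<in> e"
proof -
  obtain p where p: "f = {e,p}" "p \<in> E" "p \<noteq> e" "e \<inter> p \<noteq> {}" "e \<in> E"
    using line_dest[OF assms] by blast
  then obtain s where s: "e \<inter> p = {s}" using inter_single by blast
  have "cv f = s" using p(1) cv_pair[OF s] by simp
  moreover have "s \<in> e" using s by blast
  ultimately show ?thesis by simp
qed

lemma line_edges_mem: "a \<in> line_edges X \<Longrightarrow> \<exists>x y. a = {x,y} \<and> x\<in>X \<and> y\<in>X \<and> x\<noteq>y \<and> x\<inter>y\<noteq>{}"
  unfolding line_edges_def by blast

lemma line_edges_intro: "x\<in>X \<Longrightarrow> y\<in>X \<Longrightarrow> x\<noteq>y \<Longrightarrow> x\<inter>y\<noteq>{} \<Longrightarrow> {x,y} \<in> line_edges X"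
  unfolding line_edges_def by blast

lemma F:
  assumes "{f,g} \<in> L2_edges E"
  shows "f \<noteq> g \<and> f \<in> line_edges E \<and> g \<in> line_edges E \<and>
     (\<exists>e\<in>E. f \<inter> g = {e} \<and> e = {cv f, cv g} \<and> cv f \<noteq> cv g)"
proof -
  have c: "{f,g} \<in> line_edges (line_edges E) \<and>
    \<not> (\<exists>x y z. LG_triangle E x y z \<and> {f,g} \<subseteq> {{x, y}, {y, z}, {x, z}})"
    using assms unfolding L2_edges_def mem_Collect_eq by assumption
  hence ll: "{f,g} \<in> line_edges (line_edges E)" and ntri:
    "\<not> (\<exists>x y z. LG_triangle E x y z \<and> {f,g} \<subseteq> {{x, y}, {y, z}, {x, z}})"
    by (rule conjunct1, rule conjunct2)
  from line_edges_mem[OF ll] obtain x y where xy: "{f,g} = {x,y}" "x \<in> line_edges E" "y \<in> line_edges E" "x \<noteq> y" "x \<inter> y \<noteq> {}"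
    by blast
  from xy(1) have "(f = x \<and> g = y) \<or> (f = y \<and> g = x)" by (simp add: doubleton_eq_iff)
  hence fg: "f \<noteq> g" "f \<in> line_edges E" "g \<in> line_edges E" "f \<inter> g \<noteq> {}"
    using xy(2-5) by (auto simp: Int_commute)
  then obtain e where e: "e \<in> f" "e \<in> g" by blast
  obtain p where p: "f = {e,p}" "p \<in> E" "p \<noteq> e" "e \<inter> p \<noteq> {}" "e \<in> E"
    using line_dest[OF fg(2) e(1)] by blast
  obtain q where q: "g = {e,q}" "q \<in> E" "q \<noteq> e" "e \<inter> q \<noteq> {}"
    using line_dest[OF fg(3) e(2)] by blast
  have pq: "p \<noteq> q" using p q fg by auto
  have fgi: "f \<inter> g = {e}" using p q pq by auto
  obtain s where s: "e \<inter> p = {s}" using inter_single p by metis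
  obtain t where t: "e \<inter> q = {t}" using inter_single p q by metis
  have cvf: "cv f = s" using s p cv_pair by simp
  have cvg: "cv g = t" using t q cv_pair by simp
  have st: "s \<noteq> t"
  proof
    assume "s = t"
    hence "s \<in> p \<inter> q" using s t by blast
    hence "p \<inter> q \<noteq> {}" by blast
    hence "{p,q} \<in> line_edges E" using line_edges_intro p(2) q(2) pq by blast
    moreover have "{e,p} \<in> line_edges E" "{e,q} \<in> line_edges E" using fg p(1) q(1) by simp_all
    ultimately have "LG_triangle E e p q" unfolding LG_triangle_def using p(3) q(3) pq by simp
    moreover have "{f,g} \<subseteq> {{e, p}, {p, q}, {e, q}}" using p q by auto
    ultimately show False using ntri by blast
  qed
  have "e = {s,t}" using two_set_eq[OF p(5)] s t st by blast
  thus ?thesis using fg fgi cvf cvg st p(5) by blast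
qed

lemma L2_sub: "a \<in> L2_edges E \<Longrightarrow> a \<in> line_edges (line_edges E)"
  unfolding L2_edges_def mem_Collect_eq by (rule conjunct1)

lemma L2_pair: "a \<in> L2_edges E \<Longrightarrow> \<exists>x y. a = {x,y} \<and> x \<noteq> y"
  using line_edges_mem[OF L2_sub] by blast

lemma L2_other: assumes "a \<in> L2_edges E" "f \<in> a" shows "\<exists>g. a = {f,g} \<and> f \<noteq> g"
proof -
  obtain x y where xy: "a = {x,y}" "x \<noteq> y" using L2_pair[OF assms(1)] by blast
  show ?thesis
  proof (cases "f = x")
    case True thus ?thesis using xy by blast
  next
    case False
    hence "f = y" using xy assms(2) by blast
    thus ?thesis using xy by (intro exI[of _ x]) auto
  qed
qed

end

lemma open_iff: "a \<in> open_edges E \<Lambda> \<longleftrightarrow> a \<in> L2_edges E \<and> \<Lambda> a = 1"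
  unfolding open_edges_def mem_Collect_eq by (rule refl)

lemma rc_iff: "f \<in> rc_verts E e \<longleftrightarrow> f \<in> line_edges E \<and> e \<in> f"
  unfolding rc_verts_def mem_Collect_eq by (rule refl)

context gr begin

lemma rc_card4: assumes e: "e \<in> E" shows "card (rc_verts E e) = 4"
proof -
  obtain u w where uw: "u \<noteq> w" "u \<in> V" "w \<in> V" "e = {u,w}" using edge2[OF e] by blast
  define A where "A = {y\<in>E. u \<in> y}"
  define B where "B = {y\<in>E. w \<in> y}"
  have cA: "card A = 3" "card B = 3" using cub uw unfolding cubic_def A_def B_def by auto
  have fA: "finite A" "finite B" using finE unfolding A_def B_def by auto
  have eA: "e \<in> A" "e \<in> B" using e uw unfolding A_def B_def by auto
  have R: "rc_verts E e = (\<lambda>y. {e,y}) ` ((A-{e}) \<union> (B-{e}))"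
  proof
    show "rc_verts E e \<subseteq> (\<lambda>y. {e,y}) ` ((A-{e}) \<union> (B-{e}))"
    proof
      fix f assume "f \<in> rc_verts E e"
      hence fe: "f \<in> line_edges E" "e \<in> f" unfolding rc_iff by simp_all
      then obtain p where p: "f = {e,p}" "p \<in> E" "p \<noteq> e" "e \<inter> p \<noteq> {}" using line_dest[OF fe] by blast
      hence "p \<in> (A-{e}) \<union> (B-{e})" using uw unfolding A_def B_def by auto
      thus "f \<in> (\<lambda>y. {e,y}) ` ((A-{e}) \<union> (B-{e}))" using p by blast
    qed
  next
    show "(\<lambda>y. {e,y}) ` ((A-{e}) \<union> (B-{e})) \<subseteq> rc_verts E e"
    proof
      fix f assume "f \<in> (\<lambda>y. {e,y}) ` ((A-{e}) \<union> (B-{e}))"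
      then obtain y where y: "f = {e,y}" "y \<in> E" "y \<noteq> e" "u \<in> y \<or> w \<in> y"
        unfolding A_def B_def by blast
      have "e \<inter> y \<noteq> {}" using y uw by auto
      hence "f \<in> line_edges E" using line_edges_intro[of e E y] y e by simp
      thus "f \<in> rc_verts E e" unfolding rc_iff using y by simp
    qed
  qed
  have inj: "inj_on (\<lambda>y. {e,y}) ((A-{e}) \<union> (B-{e}))"
    by (rule inj_onI) (auto simp: doubleton_eq_iff)
  have dj: "(A-{e}) \<inter> (B-{e}) = {}"
  proof (rule ccontr)
    assume "(A-{e}) \<inter> (B-{e}) \<noteq> {}"
    then obtain y where y: "y \<in> E" "u \<in> y" "w \<in> y" "y \<noteq> e" unfolding A_def B_def by blast
    hence "y = {u,w}" using two_set_eq uw by blast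
    thus False using y uw by simp
  qed
  have "card ((A-{e}) \<union> (B-{e})) = card (A-{e}) + card (B-{e})"
    using dj fA by (simp add: card_Un_disjoint)
  also have "\<dots> = 4" using cA fA eA by simp
  finally show ?thesis using R inj by (simp add: card_image)
qed

lemma rc_le2:
  assumes e: "e \<in> E" and f: "f \<in> rc_verts E e"
  shows "finite {a\<in>L2_edges E. a \<subseteq> rc_verts E e \<and> f \<in> a} \<and> card {a\<in>L2_edges E. a \<subseteq> rc_verts E e \<and> f \<in> a} \<le> 2"
proof -
  let ?S = "{a\<in>L2_edges E. a \<subseteq> rc_verts E e \<and> f \<in> a}"
  have fl: "f \<in> line_edges E" "e \<in> f" using f unfolding rc_iff by simp_all
  have s: "cv f \<in> e" using cv_in[OF fl] .
  obtain t where t: "t \<in> e" "t \<noteq> cv f" using edge2[OF e] s by blast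
  define D where "D = {y\<in>E. t \<in> y} - {e}"
  have tV: "t \<in> V" using edge2[OF e] t by blast
  have cD: "card D = 2" "finite D"
    using cub tV e t finE unfolding cubic_def D_def by auto
  have sub: "?S \<subseteq> (\<lambda>y. {f,{e,y}}) ` D"
  proof
    fix a assume a: "a \<in> ?S"
    hence aL: "a \<in> L2_edges E" "a \<subseteq> rc_verts E e" "f \<in> a" by simp_all
    then obtain g where g: "a = {f,g}" "f \<noteq> g" using L2_other[OF aL(1) aL(3)] by blast
    have F1: "\<exists>e'\<in>E. f \<inter> g = {e'} \<and> e' = {cv f, cv g} \<and> cv f \<noteq> cv g"
      using F[of f g] aL(1) g(1) by blast
    have "g \<in> rc_verts E e" using aL(2) g(1) by blast
    hence eg: "e \<in> g" "g \<in> line_edges E" unfolding rc_iff by simp_all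
    have "f \<inter> g = {e}" using F1 eg fl by blast
    hence "e = {cv f, cv g}" "cv f \<noteq> cv g" using F1 by auto
    hence tg: "t = cv g" using t by blast
    obtain q where q: "g = {e,q}" "q \<in> E" "q \<noteq> e" "e \<inter> q \<noteq> {}" using line_dest[OF eg(2) eg(1)] by blast
    obtain r where r: "e \<inter> q = {r}" using inter_single q e by metis
    have "cv g = r" using cv_pair r q by simp
    hence "t \<in> q" using tg r by blast
    hence "q \<in> D" using q unfolding D_def by simp
    thus "a \<in> (\<lambda>y. {f,{e,y}}) ` D" using g q by blast
  qed
  have "finite ((\<lambda>y. {f,{e,y}}) ` D)" using cD by simp
  moreover have "card ((\<lambda>y. {f,{e,y}}) ` D) \<le> 2" using cD card_image_le by metis
  ultimately show ?thesis using sub by (meson card_mono finite_subset le_trans)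
qed

lemma G_ex1:
  assumes e: "e \<in> E" and f: "f \<in> rc_verts E e"
  shows "\<exists>!a. a \<in> open_edges E \<Lambda> \<and> a \<subseteq> rc_verts E e \<and> f \<in> a"
proof -
  obtain a b where ab: "a \<in> rc_edges E e" "b \<in> rc_edges E e" "f \<in> a" "f \<in> b" "\<Lambda> a \<noteq> \<Lambda> b"
    using val e f unfolding valid_labeling_def by blast
  have abL: "a \<in> L2_edges E" "b \<in> L2_edges E" "a \<subseteq> rc_verts E e" "b \<subseteq> rc_verts E e"
    using ab unfolding rc_edges_def by auto
  have lab: "\<Lambda> a \<in> {0,1}" "\<Lambda> b \<in> {0,1}" using val abL unfolding valid_labeling_def labeling_def by auto
  have ex: "\<exists>c. c \<in> open_edges E \<Lambda> \<and> c \<subseteq> rc_verts E e \<and> f \<in> c"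
  proof (cases "\<Lambda> a = 1")
    case True thus ?thesis using abL ab unfolding open_edges_def by blast
  next
    case False
    hence "\<Lambda> b = 1" using lab ab by auto
    thus ?thesis using abL ab unfolding open_edges_def by blast
  qed
  moreover have "c1 = c2" if c1: "c1 \<in> open_edges E \<Lambda> \<and> c1 \<subseteq> rc_verts E e \<and> f \<in> c1"
      and c2: "c2 \<in> open_edges E \<Lambda> \<and> c2 \<subseteq> rc_verts E e \<and> f \<in> c2" for c1 c2
  proof (rule ccontr)
    assume ne: "c1 \<noteq> c2"
    let ?S = "{a\<in>L2_edges E. a \<subseteq> rc_verts E e \<and> f \<in> a}"
    have fin: "finite ?S" "card ?S \<le> 2" using rc_le2[OF e f] by auto
    have sub: "{c1,c2} \<subseteq> ?S" using c1 c2 unfolding open_edges_def by auto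
    have "card {c1,c2} = 2" using ne by simp
    hence "{c1,c2} = ?S" using card_subset_eq[OF fin(1) sub] fin(2) card_mono[OF fin(1) sub] by simp
    hence "a \<in> {c1,c2}" "b \<in> {c1,c2}" using abL ab by auto
    moreover have "\<Lambda> c1 = 1" "\<Lambda> c2 = 1" using c1 c2 unfolding open_edges_def by auto
    ultimately show False using ab by auto
  qed
  ultimately show ?thesis by blast
qed

lemma Oe2:
  assumes e: "e \<in> E"
  shows "card {a\<in>open_edges E \<Lambda>. a \<subseteq> rc_verts E e} = 2"
proof -
  let ?R = "rc_verts E e"
  let ?O = "{a\<in>open_edges E \<Lambda>. a \<subseteq> ?R}"
  have c4: "card ?R = 4" using rc_card4[OF e] .
  hence finR: "finite ?R" by (metis card.infinite zero_neq_numeral)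
  have U: "\<Union> ?O = ?R"
  proof
    show "\<Union> ?O \<subseteq> ?R" by blast
    show "?R \<subseteq> \<Union> ?O" using G_ex1[OF e] by blast
  qed
  have pw: "pairwise disjnt ?O"
    unfolding pairwise_def disjnt_def
  proof (intro ballI impI)
    fix a b assume a: "a \<in> ?O" and b: "b \<in> ?O" and ab: "a \<noteq> b"
    show "a \<inter> b = {}"
    proof (rule ccontr)
      assume "a \<inter> b \<noteq> {}"
      then obtain f where f: "f \<in> a" "f \<in> b" by blast
      hence "f \<in> ?R" using a by blast
      thus False using G_ex1[OF e] a b f ab by blast
    qed
  qed
  have c2: "\<And>a. a \<in> ?O \<Longrightarrow> card a = 2"
  proof -
    fix a assume "a \<in> ?O"
    hence aL: "a \<in> L2_edges E" unfolding open_iff by simp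
    obtain x y where "a = {x,y}" "x \<noteq> y" using L2_pair[OF aL] by blast
    thus "card a = 2" by simp
  qed
  have finA: "\<And>A. A \<in> ?O \<Longrightarrow> finite A"
  proof -
    fix A assume "A \<in> ?O"
    hence "A \<subseteq> ?R" by blast
    thus "finite A" using finR by (rule finite_subset)
  qed
  have "card ?R = sum card ?O" using card_Union_disjoint[OF pw finA] U by simp
  also have "\<dots> = 2 * card ?O" using c2 by simp
  finally show ?thesis using c4 by simp
qed

lemma deg2:
  assumes f: "f \<in> line_edges E"
  shows "card {g. {f,g} \<in> open_edges E \<Lambda>} = 2"
proof -
  obtain e1 e2 where ee: "f = {e1,e2}" "e1 \<in> E" "e2 \<in> E" "e1 \<noteq> e2"
    using line_edges_mem[OF f] by blast
  have fr: "f \<in> rc_verts E e1" "f \<in> rc_verts E e2" using f ee unfolding rc_iff by simp_all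
  obtain a1 where a1: "a1 \<in> open_edges E \<Lambda>" "a1 \<subseteq> rc_verts E e1" "f \<in> a1"
    and u1: "\<And>c. c \<in> open_edges E \<Lambda> \<Longrightarrow> c \<subseteq> rc_verts E e1 \<Longrightarrow> f \<in> c \<Longrightarrow> c = a1"
    using G_ex1[OF ee(2) fr(1)] by metis
  obtain a2 where a2: "a2 \<in> open_edges E \<Lambda>" "a2 \<subseteq> rc_verts E e2" "f \<in> a2"
    and u2: "\<And>c. c \<in> open_edges E \<Lambda> \<Longrightarrow> c \<subseteq> rc_verts E e2 \<Longrightarrow> f \<in> c \<Longrightarrow> c = a2"
    using G_ex1[OF ee(3) fr(2)] by metis
  have OL: "\<And>a. a \<in> open_edges E \<Lambda> \<Longrightarrow> a \<in> L2_edges E" unfolding open_iff by simp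
  obtain g1 where g1: "a1 = {f,g1}" using L2_other[OF OL[OF a1(1)] a1(3)] by blast
  obtain g2 where g2: "a2 = {f,g2}" using L2_other[OF OL[OF a2(1)] a2(3)] by blast
  have N: "{g. {f,g} \<in> open_edges E \<Lambda>} = {g1,g2}"
  proof
    show "{g1,g2} \<subseteq> {g. {f,g} \<in> open_edges E \<Lambda>}" using a1 a2 g1 g2 by auto
    show "{g. {f,g} \<in> open_edges E \<Lambda>} \<subseteq> {g1,g2}"
    proof
      fix g assume "g \<in> {g. {f,g} \<in> open_edges E \<Lambda>}"
      hence go: "{f,g} \<in> open_edges E \<Lambda>" by simp
      from F[OF OL[OF go]] obtain e' where e': "f \<inter> g = {e'}" "g \<in> line_edges E" by blast
      have "e' \<in> f" using e' by blast
      hence "e' = e1 \<or> e' = e2" using ee by auto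
      thus "g \<in> {g1,g2}"
      proof
        assume "e' = e1"
        hence "{f,g} \<subseteq> rc_verts E e1" using e' f fr by (auto simp: rc_iff)
        hence "{f,g} = {f,g1}" using u1[OF go] g1 by simp
        thus ?thesis by (auto simp: doubleton_eq_iff)
      next
        assume "e' = e2"
        hence "{f,g} \<subseteq> rc_verts E e2" using e' f fr by (auto simp: rc_iff)
        hence "{f,g} = {f,g2}" using u2[OF go] g2 by simp
        thus ?thesis by (auto simp: doubleton_eq_iff)
      qed
    qed
  qed
  have "g1 \<noteq> g2"
  proof
    assume eq: "g1 = g2"
    from F[OF OL[OF a1(1)[unfolded g1]]] obtain e' where e': "f \<inter> g1 = {e'}" by blast
    have "g1 \<in> rc_verts E e1" using a1(2) g1 by blast
    hence "e1 \<in> g1" unfolding rc_iff by simp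
    moreover have "g1 \<in> rc_verts E e2" using a2(2) g2 eq by blast
    hence "e2 \<in> g1" unfolding rc_iff by simp
    ultimately have "e1 \<in> f \<inter> g1" "e2 \<in> f \<inter> g1" using ee by auto
    thus False using e' ee by auto
  qed
  thus ?thesis using N by simp
qed

end

context two_reg begin

lemma comp_len:
  assumes x: "x \<in> W" and c: "cyc fs" and s: "set fs = comp x"
  shows "3 \<le> length fs"
proof -
  have sub: "insert x (nb x) \<subseteq> comp x" using self_comp[OF x] comp_closed[OF self_comp[OF x]] by blast
  have "x \<notin> nb x" using nb_W by blast
  hence "card (insert x (nb x)) = 3" using card_nb[OF x] fin_nb[OF x] by simp
  moreover have "finite (comp x)" using comp_W finW by (rule finite_subset)
  ultimately have "3 \<le> card (comp x)" using sub by (metis card_mono)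
  moreover have "card (set fs) = length fs" using c unfolding cyc_def by (simp add: distinct_card)
  ultimately show ?thesis using s by simp
qed

lemma count_cyc:
  assumes c: "cyc fs" and n: "3 \<le> length fs"
  shows "count_list (map (\<lambda>i. h {fs!i, fs!((i+1) mod length fs)}) [0..<length fs]) e
     = card {a\<in>Op. a \<subseteq> set fs \<and> h a = e}"
proof -
  let ?n = "length fs"
  let ?ed = "\<lambda>i. {fs!i, fs!((i+1) mod ?n)}"
  have "count_list (map (\<lambda>i. h (?ed i)) [0..<?n]) e = card {i. i < ?n \<and> e = map (\<lambda>i. h (?ed i)) [0..<?n] ! i}"
    by (simp only: count_list_eq_length_filter length_filter_conv_card length_map length_upt diff_zero)
  also have "{i. i < ?n \<and> e = map (\<lambda>i. h (?ed i)) [0..<?n] ! i} = {i\<in>{..<?n}. h (?ed i) = e}" by auto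
  also have "card \<dots> = card (?ed ` {i\<in>{..<?n}. h (?ed i) = e})"
    using cyc_edges(2)[OF c n] by (intro card_image[symmetric]) (rule inj_on_subset, auto)
  also have "?ed ` {i\<in>{..<?n}. h (?ed i) = e} = {a \<in> ?ed ` {..<?n}. h a = e}" by auto
  also have "\<dots> = {a \<in> {a\<in>Op. a \<subseteq> set fs}. h a = e}" by (simp only: cyc_edges(1)[OF c n])
  also have "\<dots> = {a\<in>Op. a \<subseteq> set fs \<and> h a = e}" by blast
  finally show ?thesis .
qed

end

context gr begin

lemma proj_closed:
  assumes ne: "fs \<noteq> []" and ed: "\<forall>i<length fs. {fs!i, fs!((i+1) mod length fs)} \<in> L2_edges E"
  shows "closed_walk E (proj_walk fs)"
  unfolding closed_walk_def
proof (intro conjI exI[of _ "map cv fs"])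
  show "proj_walk fs \<noteq> []" using ne by (simp add: proj_walk_def)
  show "length (map cv fs) = length (proj_walk fs)" by (simp add: proj_walk_def)
  show "\<forall>i<length (proj_walk fs). proj_walk fs ! i \<in> E \<and>
        proj_walk fs ! i = {map cv fs ! i, map cv fs ! ((i + 1) mod length (proj_walk fs))}"
  proof (intro allI impI)
    fix i assume "i < length (proj_walk fs)"
    hence i: "i < length fs" by (simp add: proj_walk_def)
    let ?j = "(i+1) mod length fs"
    have "0 < length fs" using i by linarith
    hence j: "?j < length fs" by simp
    obtain e where e: "e \<in> E" "fs!i \<inter> fs!?j = {e}" "e = {cv (fs!i), cv (fs!?j)}"
      using F[of "fs!i" "fs!?j"] ed i by blast
    have "proj_walk fs ! i = e" using i e(2) by (simp add: proj_walk_def)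
    thus "proj_walk fs ! i \<in> E \<and>
        proj_walk fs ! i = {map cv fs ! i, map cv fs ! ((i + 1) mod length (proj_walk fs))}"
      using e i j by (simp add: proj_walk_def)
  qed
qed

lemma lab_eq:
  assumes a: "a \<in> open_edges E \<Lambda>" and e: "e \<in> E"
  shows "the_elem (\<Inter> a) = e \<longleftrightarrow> a \<subseteq> rc_verts E e"
proof -
  have aL: "a \<in> L2_edges E" using a unfolding open_iff by simp
  obtain x y where xy: "a = {x,y}" "x \<noteq> y" using L2_pair[OF aL] by blast
  obtain e' where e': "x \<inter> y = {e'}" "x \<in> line_edges E" "y \<in> line_edges E"
    using F[of x y] aL xy by blast
  have "the_elem (\<Inter> a) = e'" using xy e' by simp
  moreover have "a \<subseteq> rc_verts E e \<longleftrightarrow> e \<in> x \<inter> y" using xy e' by (auto simp: rc_iff)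
  ultimately show ?thesis using e' by auto
qed

end

theorem lemma2p9:
  fixes V :: "'v set" and E :: "'v set set"
    and \<Lambda> :: "'v set set set \<Rightarrow> nat"
  assumes "simple_graph V E" and "connected_graph V E" and "bridgeless V E"
    and "triangle_free E" and "cubic V E"
    and "valid_labeling E \<Lambda>"
  shows "(\<forall>\<gamma>\<in>Gamma E \<Lambda>. \<exists>fs. cyclic_order E \<Lambda> \<gamma> fs)
    \<and> (\<forall>\<gamma>\<in>Gamma E \<Lambda>. \<forall>fs. cyclic_order E \<Lambda> \<gamma> fs \<longrightarrow> closed_walk E (proj_walk fs))
    \<and> (\<forall>ord. (\<forall>\<gamma>\<in>Gamma E \<Lambda>. cyclic_order E \<Lambda> \<gamma> (ord \<gamma>)) \<longrightarrow>
         (\<forall>e\<in>E. (\<Sum>\<gamma>\<in>Gamma E \<Lambda>. count_list (proj_walk (ord \<gamma>)) e) = 2))"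
proof -
  interpret gr V E \<Lambda> using assms(1,5,6) by unfold_locales
  let ?W = "line_edges E"
  let ?O = "open_edges E \<Lambda>"
  have OL: "\<And>a. a \<in> ?O \<Longrightarrow> a \<in> L2_edges E" unfolding open_iff by simp
  have WE: "?W \<subseteq> Pow E" using line_edges_mem by blast
  have fW: "finite ?W" using finite_subset[OF WE] finE by simp
  have edgeW: "\<And>a. a \<in> ?O \<Longrightarrow> \<exists>x y. a = {x,y} \<and> x \<noteq> y \<and> x \<in> ?W \<and> y \<in> ?W"
  proof -
    fix a assume a: "a \<in> ?O"
    obtain x y where xy: "a = {x,y}" "x \<noteq> y" using L2_pair[OF OL[OF a]] by blast
    thus "\<exists>x y. a = {x,y} \<and> x \<noteq> y \<and> x \<in> ?W \<and> y \<in> ?W" using F[of x y] OL[OF a] by blast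
  qed
  interpret T: two_reg ?W ?O
    using fW edgeW deg2 by unfold_locales auto
  have Gam: "Gamma E \<Lambda> = {T.comp f | f. f \<in> ?W}" unfolding Gamma_def T.comp_def by simp
  have cyc_iff: "\<And>\<gamma> fs. cyclic_order E \<Lambda> \<gamma> fs \<longleftrightarrow> T.cyc fs \<and> set fs = \<gamma>"
    unfolding cyclic_order_def T.cyc_def by auto
  have P1: "\<forall>\<gamma>\<in>Gamma E \<Lambda>. \<exists>fs. cyclic_order E \<Lambda> \<gamma> fs"
  proof
    fix \<gamma> assume "\<gamma> \<in> Gamma E \<Lambda>"
    then obtain f where f: "f \<in> ?W" "\<gamma> = T.comp f" using Gam by blast
    thus "\<exists>fs. cyclic_order E \<Lambda> \<gamma> fs" using T.cycle_exists[OF f(1)] cyc_iff by blast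
  qed
  have P2: "\<forall>\<gamma>\<in>Gamma E \<Lambda>. \<forall>fs. cyclic_order E \<Lambda> \<gamma> fs \<longrightarrow> closed_walk E (proj_walk fs)"
  proof (intro ballI allI impI)
    fix \<gamma> fs assume g: "\<gamma> \<in> Gamma E \<Lambda>" and co: "cyclic_order E \<Lambda> \<gamma> fs"
    then obtain f where f: "f \<in> ?W" "\<gamma> = T.comp f" using Gam by blast
    have "f \<in> set fs" using co cyc_iff f T.self_comp by blast
    hence ne: "fs \<noteq> []" by auto
    have "\<forall>i<length fs. {fs!i, fs!((i+1) mod length fs)} \<in> L2_edges E"
      using co OL unfolding cyclic_order_def by blast
    thus "closed_walk E (proj_walk fs)" using proj_closed ne by blast
  qed
  have P3: "\<forall>ord. (\<forall>\<gamma>\<in>Gamma E \<Lambda>. cyclic_order E \<Lambda> \<gamma> (ord \<gamma>)) \<longrightarrow>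
         (\<forall>e\<in>E. (\<Sum>\<gamma>\<in>Gamma E \<Lambda>. count_list (proj_walk (ord \<gamma>)) e) = 2)"
  proof (intro allI impI ballI)
    fix ord e assume ord: "\<forall>\<gamma>\<in>Gamma E \<Lambda>. cyclic_order E \<Lambda> \<gamma> (ord \<gamma>)" and e: "e \<in> E"
    let ?lab = "\<lambda>a. the_elem (\<Inter> a)"
    let ?S = "\<lambda>\<gamma>. {a\<in>?O. a \<subseteq> \<gamma> \<and> ?lab a = e}"
    have cnt: "count_list (proj_walk (ord \<gamma>)) e = card (?S \<gamma>)" if g: "\<gamma> \<in> Gamma E \<Lambda>" for \<gamma>
    proof -
      obtain f where f: "f \<in> ?W" "\<gamma> = T.comp f" using Gam g by blast
      have c: "T.cyc (ord \<gamma>)" "set (ord \<gamma>) = \<gamma>" using ord g cyc_iff by blast+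
      have n: "3 \<le> length (ord \<gamma>)" using T.comp_len[OF f(1) c(1)] c(2) f(2) by simp
      have "proj_walk (ord \<gamma>) = map (\<lambda>i. ?lab {ord \<gamma>!i, ord \<gamma>!((i+1) mod length (ord \<gamma>))}) [0..<length (ord \<gamma>)]"
        by (simp add: proj_walk_def)
      thus ?thesis using T.count_cyc[OF c(1) n, of ?lab e] c(2) by simp
    qed
    have finG: "finite (Gamma E \<Lambda>)"
    proof -
      have "Gamma E \<Lambda> \<subseteq> Pow ?W" using Gam T.comp_W by blast
      thus ?thesis using fW by (simp add: finite_subset)
    qed
    have finO: "finite ?O"
    proof -
      have "?O \<subseteq> Pow ?W" using edgeW by blast
      thus ?thesis using fW by (simp add: finite_subset)
    qed
    have disj: "\<forall>i\<in>Gamma E \<Lambda>. \<forall>j\<in>Gamma E \<Lambda>. i \<noteq> j \<longrightarrow> ?S i \<inter> ?S j = {}"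
    proof (intro ballI impI)
      fix i j assume i: "i \<in> Gamma E \<Lambda>" and j: "j \<in> Gamma E \<Lambda>" and ij: "i \<noteq> j"
      obtain x where x: "i = T.comp x" using Gam i by blast
      obtain y where y: "j = T.comp y" using Gam j by blast
      show "?S i \<inter> ?S j = {}"
      proof (rule ccontr)
        assume "?S i \<inter> ?S j \<noteq> {}"
        then obtain a where a: "a \<in> ?O" "a \<subseteq> i" "a \<subseteq> j" by blast
        obtain p q where "a = {p,q}" using edgeW[OF a(1)] by blast
        hence "p \<in> T.comp x" "p \<in> T.comp y" using a x y by auto
        hence "i = j" using T.comp_disj x y by blast
        thus False using ij by simp
      qed
    qed
    have U: "(\<Union>\<gamma>\<in>Gamma E \<Lambda>. ?S \<gamma>) = {a\<in>?O. ?lab a = e}"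
    proof
      show "(\<Union>\<gamma>\<in>Gamma E \<Lambda>. ?S \<gamma>) \<subseteq> {a\<in>?O. ?lab a = e}" by blast
      show "{a\<in>?O. ?lab a = e} \<subseteq> (\<Union>\<gamma>\<in>Gamma E \<Lambda>. ?S \<gamma>)"
      proof
        fix a assume a: "a \<in> {a\<in>?O. ?lab a = e}"
        then obtain p q where pq: "a = {p,q}" "p \<in> ?W" using edgeW by blast
        have "q \<in> T.nb p" using a pq unfolding T.nb_def by simp
        hence "a \<subseteq> T.comp p" using pq T.self_comp T.comp_closed by blast
        moreover have "T.comp p \<in> Gamma E \<Lambda>" using Gam pq by blast
        ultimately show "a \<in> (\<Union>\<gamma>\<in>Gamma E \<Lambda>. ?S \<gamma>)" using a by blast
      qed
    qed
    have "(\<Sum>\<gamma>\<in>Gamma E \<Lambda>. count_list (proj_walk (ord \<gamma>)) e) = (\<Sum>\<gamma>\<in>Gamma E \<Lambda>. card (?S \<gamma>))"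
      using cnt by (rule sum.cong[OF refl])
    also have "\<dots> = card (\<Union>\<gamma>\<in>Gamma E \<Lambda>. ?S \<gamma>)"
      using card_UN_disjoint[OF finG _ disj] finO by (simp add: finite_subset)
    also have "\<dots> = card {a\<in>?O. ?lab a = e}" using U by simp
    also have "{a\<in>?O. ?lab a = e} = {a\<in>?O. a \<subseteq> rc_verts E e}" using lab_eq e by blast
    also have "card \<dots> = 2" using Oe2[OF e] .
    finally show "(\<Sum>\<gamma>\<in>Gamma E \<Lambda>. count_list (proj_walk (ord \<gamma>)) e) = 2" .
  qed
  show ?thesis using P1 P2 P3 by blast
qed

end
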